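(* Let $T$ be a simple tree of maximum degree $\Delta$, let $k\ge\Delta$, and let $f$ be a covering projection from a graph $G$ to $T^{(k)}$. If $G$ contains a cycle of length 4 as a subgraph, then for at least one of the two pairs of opposite edges of this 4-cycle, both edges of the pair are mapped by $f$ onto semi-edges.
   Context: A graph is a triple $(V,\Lambda,\iota)$ where $V$ is a set of vertices, $\Lambda=E\cup L\cup S$ is a set of links partitioned into edges, loops and semi-edges, and $\iota$ assigns to each edge a 2-element subset of $V$ and to each loop or semi-edge a single vertex. A covering projection from $G$ to $H$ is a map $f:V_G\cup\Lambda_G\to V_H\cup\Lambda_H$ sending vertices to vertices and links to links such that: for every edge $e$ of $H$ with end-vertices $u,v$, $f^{-1}(e)$ is a perfect matching between $f^{-1}(u)$ and $f^{-1}(v)$; for every loop $l$ of $H$ at $u$, $f^{-1}(l)$ is a disjoint union of cycles spanning $f^{-1}(u)$; for every semi-edge $s$ of $H$ at $u$, $f^{-1}(s)$ is a disjoint union of edges and semi-edges spanning $f^{-1}(u)$. For a simple tree $T$ of maximum degree $\Delta$ and $k\ge\Delta$, $T^{(k)}$ denotes the $k$-regular graph obtained from $T$ by attaching $k-\deg_T(u)$ semi-edges to each vertex $u$. *)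

theory Defs
  imports Main
begin

text \<open>A graph is given by a vertex set,
three pairwise disjoint sets of links (edges, loops, semi-edges) and an incidence
map assigning to each link its set of end-vertices.\<close>

record ('v, 'l) graph =
  gV :: "'v set"
  gE :: "'l set"
  gL :: "'l set"
  gS :: "'l set"
  gi :: "'l \<Rightarrow> 'v set"

definition links :: "('v, 'l) graph \<Rightarrow> 'l set" where
  "links G = gE G \<union> gL G \<union> gS G"

definition wf_graph :: "('v, 'l) graph \<Rightarrow> bool" where
  "wf_graph G \<longleftrightarrow>
     finite (gV G) \<and> finite (links G) \<and>
     gE G \<inter> gL G = {} \<and> gE G \<inter> gS G = {} \<and> gL G \<inter> gS G = {} \<and>
     (\<forall>e\<in>gE G. \<exists>u v. u \<noteq> v \<and> u \<in> gV G \<and> v \<in> gV G \<and> gi G e = {u, v}) \<and>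
     (\<forall>l\<in>gL G \<union> gS G. \<exists>u\<in>gV G. gi G l = {u})"

definition fiber :: "('v, 'l) graph \<Rightarrow> ('v \<Rightarrow> 'w) \<Rightarrow> 'w \<Rightarrow> 'v set" where
  "fiber G fv u = {x \<in> gV G. fv x = u}"

definition lfiber :: "('v, 'l) graph \<Rightarrow> ('l \<Rightarrow> 'm) \<Rightarrow> 'm \<Rightarrow> 'l set" where
  "lfiber G fl a = {l \<in> links G. fl l = a}"

definition covering ::
  "('v, 'l) graph \<Rightarrow> ('w, 'm) graph \<Rightarrow> ('v \<Rightarrow> 'w) \<Rightarrow> ('l \<Rightarrow> 'm) \<Rightarrow> bool" where
  "covering G H fv fl \<longleftrightarrow>
     (\<forall>x\<in>gV G. fv x \<in> gV H) \<and> (\<forall>l\<in>links G. fl l \<in> links H) \<and>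
     \<comment> \<open>edges: preimage is a perfect matching between the two fibres\<close>
     (\<forall>e\<in>gE H. \<forall>u v. u \<noteq> v \<and> gi H e = {u, v} \<longrightarrow>
        (\<forall>l\<in>lfiber G fl e. l \<in> gE G \<and>
            (\<exists>a b. gi G l = {a, b} \<and> a \<in> fiber G fv u \<and> b \<in> fiber G fv v)) \<and>
        (\<forall>x\<in>fiber G fv u \<union> fiber G fv v. \<exists>!l. l \<in> lfiber G fl e \<and> x \<in> gi G l)) \<and>
     \<comment> \<open>loops: preimage is a disjoint union of cycles spanning the fibre
         (each fibre vertex has degree 2, a loop counting twice)\<close>
     (\<forall>lp\<in>gL H. \<forall>u. gi H lp = {u} \<longrightarrow>
        (\<forall>l\<in>lfiber G fl lp. (l \<in> gE G \<or> l \<in> gL G) \<and> gi G l \<subseteq> fiber G fv u) \<and>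
        (\<forall>x\<in>fiber G fv u.
            card {l \<in> lfiber G fl lp. l \<in> gE G \<and> x \<in> gi G l}
            + 2 * card {l \<in> lfiber G fl lp. l \<in> gL G \<and> x \<in> gi G l} = 2)) \<and>
     \<comment> \<open>semi-edges: preimage is a disjoint union of edges and semi-edges spanning the fibre\<close>
     (\<forall>s\<in>gS H. \<forall>u. gi H s = {u} \<longrightarrow>
        (\<forall>l\<in>lfiber G fl s. (l \<in> gE G \<or> l \<in> gS G) \<and> gi G l \<subseteq> fiber G fv u) \<and>
        (\<forall>x\<in>fiber G fv u. \<exists>!l. l \<in> lfiber G fl s \<and> x \<in> gi G l))"

definition simple_graph :: "'a set \<Rightarrow> 'a set set \<Rightarrow> bool" where
  "simple_graph VT ET \<longleftrightarrow> finite VT \<and>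
     (\<forall>e\<in>ET. \<exists>u v. u \<noteq> v \<and> u \<in> VT \<and> v \<in> VT \<and> e = {u, v})"

definition sadj :: "'a set set \<Rightarrow> 'a \<Rightarrow> 'a \<Rightarrow> bool" where
  "sadj ET x y \<longleftrightarrow> {x, y} \<in> ET"

definition is_tree :: "'a set \<Rightarrow> 'a set set \<Rightarrow> bool" where
  "is_tree VT ET \<longleftrightarrow> simple_graph VT ET \<and> VT \<noteq> {} \<and>
     (\<forall>u\<in>VT. \<forall>v\<in>VT. (sadj ET)\<^sup>*\<^sup>* u v) \<and>
     \<not> (\<exists>cs. length cs \<ge> 3 \<and> distinct cs \<and>
          (\<forall>i<length cs. {cs ! i, cs ! ((i + 1) mod length cs)} \<in> ET))"

definition sdeg :: "'a set set \<Rightarrow> 'a \<Rightarrow> nat" where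
  "sdeg ET u = card {e \<in> ET. u \<in> e}"

definition max_degree :: "'a set \<Rightarrow> 'a set set \<Rightarrow> nat" where
  "max_degree VT ET = Max (sdeg ET ` VT)"

text \<open>T^(k): attach k - deg(u) semi-edges to each vertex u. Tree edges are the links
Inl e, the semi-edges at u are Inr (u, i) for i < k - deg u.\<close>

definition Tk :: "'a set \<Rightarrow> 'a set set \<Rightarrow> nat \<Rightarrow> ('a, 'a set + ('a \<times> nat)) graph" where
  "Tk VT ET k = \<lparr> gV = VT, gE = Inl ` ET, gL = {},
      gS = {Inr (u, i) | u i. u \<in> VT \<and> i < k - sdeg ET u},
      gi = (\<lambda>l. case l of Inl e \<Rightarrow> e | Inr (u, i) \<Rightarrow> {u}) \<rparr>"

end

theory Submission imports Defs begin
lemma tree_cyc: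
  assumes "is_tree VT ET" "distinct cs" "length cs \<ge> 3" "\<forall>i<length cs. {cs ! i, cs ! ((i + 1) mod length cs)} \<in> ET"
  shows False
  using assms unfolding is_tree_def by blast

lemma tree_no3:
  assumes "is_tree VT ET" "distinct [x,y,z]" "{x,y} \<in> ET" "{y,z} \<in> ET" "{z,x} \<in> ET"
  shows False
proof (rule tree_cyc[OF assms(1,2)])
  show "\<forall>i<length [x,y,z]. {[x,y,z] ! i, [x,y,z] ! ((i + 1) mod length [x,y,z])} \<in> ET"
  proof (intro allI impI)
    fix i assume "i < length [x,y,z]"
    then have "i = 0 \<or> i = 1 \<or> i = 2" by auto
    then show "{[x,y,z] ! i, [x,y,z] ! ((i + 1) mod length [x,y,z])} \<in> ET" using assms(3-5) by auto
  qed
qed simp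

lemma tree_no4:
  assumes "is_tree VT ET" "distinct [x,y,z,w]" "{x,y} \<in> ET" "{y,z} \<in> ET" "{z,w} \<in> ET" "{w,x} \<in> ET"
  shows False
proof (rule tree_cyc[OF assms(1,2)])
  show "\<forall>i<length [x,y,z,w]. {[x,y,z,w] ! i, [x,y,z,w] ! ((i + 1) mod length [x,y,z,w])} \<in> ET"
  proof (intro allI impI)
    fix i assume "i < length [x,y,z,w]"
    then have "i = 0 \<or> i = 1 \<or> i = 2 \<or> i = 3" by auto
    then show "{[x,y,z,w] ! i, [x,y,z,w] ! ((i + 1) mod length [x,y,z,w])} \<in> ET" using assms(3-6) by auto
  qed
qed simp


lemma cov_links: "covering G H fv fl \<Longrightarrow> l \<in> links G \<Longrightarrow> fl l \<in> links H"
  unfolding covering_def by (elim conjE) (erule bspec)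


lemma cov_edge: assumes "covering G H fv fl" "e \<in> gE H" "u \<noteq> v" "gi H e = {u, v}"
  shows "(\<forall>l\<in>lfiber G fl e. l \<in> gE G \<and>
            (\<exists>a b. gi G l = {a, b} \<and> a \<in> fiber G fv u \<and> b \<in> fiber G fv v)) \<and>
        (\<forall>x\<in>fiber G fv u \<union> fiber G fv v. \<exists>!l. l \<in> lfiber G fl e \<and> x \<in> gi G l)"
proof -
  have "\<forall>e\<in>gE H. \<forall>u v. u \<noteq> v \<and> gi H e = {u, v} \<longrightarrow>
        (\<forall>l\<in>lfiber G fl e. l \<in> gE G \<and>
            (\<exists>a b. gi G l = {a, b} \<and> a \<in> fiber G fv u \<and> b \<in> fiber G fv v)) \<and>
        (\<forall>x\<in>fiber G fv u \<union> fiber G fv v. \<exists>!l. l \<in> lfiber G fl e \<and> x \<in> gi G l)"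
    using assms(1) unfolding covering_def by (elim conjE)
  then show ?thesis using assms(2-4) by blast
qed

lemma cov_semi: assumes "covering G H fv fl" "s \<in> gS H" "gi H s = {u}"
  shows "(\<forall>l\<in>lfiber G fl s. (l \<in> gE G \<or> l \<in> gS G) \<and> gi G l \<subseteq> fiber G fv u) \<and>
        (\<forall>x\<in>fiber G fv u. \<exists>!l. l \<in> lfiber G fl s \<and> x \<in> gi G l)"
proof -
  have "\<forall>s\<in>gS H. \<forall>u. gi H s = {u} \<longrightarrow>
        (\<forall>l\<in>lfiber G fl s. (l \<in> gE G \<or> l \<in> gS G) \<and> gi G l \<subseteq> fiber G fv u) \<and>
        (\<forall>x\<in>fiber G fv u. \<exists>!l. l \<in> lfiber G fl s \<and> x \<in> gi G l)"
    using assms(1) unfolding covering_def by (elim conjE)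
  then show ?thesis using assms(2-3) by blast
qed


lemma edge_image:
  assumes cov: "covering G (Tk VT ET k) fv fl" and sg: "simple_graph VT ET"
    and l: "l \<in> gE G" and gl: "gi G l = {x,y}"
  shows "(fl l \<in> gS (Tk VT ET k) \<and> fv x = fv y) \<or>
         (fl l \<notin> gS (Tk VT ET k) \<and> fl l = Inl {fv x, fv y} \<and> {fv x, fv y} \<in> ET \<and> fv x \<noteq> fv y)"
proof -
  have lG: "l \<in> links G" using l by (simp add: links_def)
  have fin: "fl l \<in> links (Tk VT ET k)" using cov_links[OF cov lG] .
  have lf: "l \<in> lfiber G fl (fl l)" using lG by (simp add: lfiber_def)
  show ?thesis
  proof (cases "fl l \<in> gS (Tk VT ET k)")
    case True
    then obtain u j where uj: "fl l = Inr (u,j)" by (auto simp: Tk_def)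
    have gi: "gi (Tk VT ET k) (fl l) = {u}" using uj by (simp add: Tk_def)
    have "gi G l \<subseteq> fiber G fv u" using cov_semi[OF cov True gi] lf by blast
    then show ?thesis using True gl by (auto simp: fiber_def)
  next
    case False
    then obtain e where e: "fl l = Inl e" "e \<in> ET" using fin by (auto simp: Tk_def links_def)
    then obtain u w where uw: "u \<noteq> w" "e = {u,w}" using sg unfolding simple_graph_def by blast
    have eH: "fl l \<in> gE (Tk VT ET k)" and gi: "gi (Tk VT ET k) (fl l) = {u,w}" using e uw by (auto simp: Tk_def)
    obtain a b where "gi G l = {a,b}" "a \<in> fiber G fv u" "b \<in> fiber G fv w"
      using cov_edge[OF cov eH uw(1) gi] lf by blast
    then have "{fv x, fv y} = {u,w}" using gl by (auto simp: fiber_def doubleton_eq_iff)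
    then show ?thesis using False e uw by (auto simp: doubleton_eq_iff insert_commute)
  qed
qed

lemma adj_distinct:
  assumes cov: "covering G (Tk VT ET k) fv fl" and sg: "simple_graph VT ET"
    and l1: "l1 \<in> gE G" and l2: "l2 \<in> gE G" and g1: "gi G l1 = {x,y}" and g2: "gi G l2 = {y,z}"
    and xz: "x \<noteq> z" and ns: "fl l1 \<notin> gS (Tk VT ET k)" and eq: "fl l1 = fl l2"
  shows False
proof -
  have lG: "l1 \<in> links G" "l2 \<in> links G" using l1 l2 by (auto simp: links_def)
  have fin: "fl l1 \<in> links (Tk VT ET k)" using cov_links[OF cov lG(1)] .
  then obtain e where e: "fl l1 = Inl e" "e \<in> ET" using ns by (auto simp: Tk_def links_def)
  then obtain u w where uw: "u \<noteq> w" "e = {u,w}" using sg unfolding simple_graph_def by blast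
  have eH: "fl l1 \<in> gE (Tk VT ET k)" and gi: "gi (Tk VT ET k) (fl l1) = {u,w}" using e uw by (auto simp: Tk_def)
  have m1: "l1 \<in> lfiber G fl (fl l1)" and m2: "l2 \<in> lfiber G fl (fl l1)" using lG eq by (auto simp: lfiber_def)
  note CE = cov_edge[OF cov eH uw(1) gi]
  obtain a b where ab: "gi G l1 = {a,b}" "a \<in> fiber G fv u" "b \<in> fiber G fv w"
      using CE m1 by blast
  have "y \<in> fiber G fv u \<union> fiber G fv w" using ab g1 by (auto simp: doubleton_eq_iff)
  hence "\<exists>!l. l \<in> lfiber G fl (fl l1) \<and> y \<in> gi G l" using CE by blast
  hence "l1 = l2" using m1 m2 g1 g2 by auto
  then show False using g1 g2 xz by (auto simp: doubleton_eq_iff)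
qed


lemma comb:
  assumes tr: "is_tree VT ET"
    and c0: "(s0 \<and> a0 = a1) \<or> (\<not> s0 \<and> X0 \<and> {a0,a1} \<in> ET \<and> a0 \<noteq> a1)"
    and c1: "(s1 \<and> a1 = a2) \<or> (\<not> s1 \<and> X1 \<and> {a1,a2} \<in> ET \<and> a1 \<noteq> a2)"
    and c2: "(s2 \<and> a2 = a3) \<or> (\<not> s2 \<and> X2 \<and> {a2,a3} \<in> ET \<and> a2 \<noteq> a3)"
    and c3: "(s3 \<and> a3 = a0) \<or> (\<not> s3 \<and> X3 \<and> {a3,a0} \<in> ET \<and> a3 \<noteq> a0)"
    and d0: "\<not> s0 \<and> \<not> s1 \<Longrightarrow> a0 \<noteq> a2"
    and d1: "\<not> s1 \<and> \<not> s2 \<Longrightarrow> a1 \<noteq> a3"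
    and d2: "\<not> s2 \<and> \<not> s3 \<Longrightarrow> a2 \<noteq> a0"
    and d3: "\<not> s3 \<and> \<not> s0 \<Longrightarrow> a3 \<noteq> a1"
  shows "(s0 \<and> s2) \<or> (s1 \<and> s3)"
proof -
  note t3 = tree_no3[OF tr] and t4 = tree_no4[OF tr]
  have sym: "{a,b} \<in> ET \<Longrightarrow> {b,a} \<in> ET" for a b by (simp add: insert_commute)
  have n4: "\<not>(\<not>s0 \<and> \<not>s1 \<and> \<not>s2 \<and> \<not>s3)"
  proof
    assume h: "\<not>s0 \<and> \<not>s1 \<and> \<not>s2 \<and> \<not>s3"
    show False
    proof (rule t4[of a0 a1 a2 a3])
      show "distinct [a0, a1, a2, a3]" using h c0 c1 c2 c3 d0 d1 d2 d3 by auto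
    qed (use h c0 c1 c2 c3 in auto)
  qed
  show ?thesis
    using n4 c0 c1 c2 c3 d0 d1 d2 d3 t3[of a0 a1 a2] t3[of a1 a2 a3] t3[of a2 a3 a0] t3[of a3 a0 a1]
    apply (cases s0; cases s1; cases s2; cases s3)
    apply (simp_all add: insert_commute)
    done
qed


theorem mainTheorem3:
  fixes VT :: "'a set" and ET :: "'a set set" and k \<Delta> :: nat
    and G :: "('v, 'l) graph"
    and fv :: "'v \<Rightarrow> 'a" and fl :: "'l \<Rightarrow> 'a set + ('a \<times> nat)"
    and v0 v1 v2 v3 :: 'v and e0 e1 e2 e3 :: 'l
  assumes "is_tree VT ET"
    and "\<Delta> = max_degree VT ET"
    and "k \<ge> \<Delta>"
    and "wf_graph G"
    and "covering G (Tk VT ET k) fv fl"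
    and "distinct [v0, v1, v2, v3]"
    and "{e0, e1, e2, e3} \<subseteq> gE G"
    and "gi G e0 = {v0, v1}" and "gi G e1 = {v1, v2}"
    and "gi G e2 = {v2, v3}" and "gi G e3 = {v3, v0}"
  shows "(fl e0 \<in> gS (Tk VT ET k) \<and> fl e2 \<in> gS (Tk VT ET k)) \<or>
         (fl e1 \<in> gS (Tk VT ET k) \<and> fl e3 \<in> gS (Tk VT ET k))"
proof -
  have sg: "simple_graph VT ET" using assms(1) by (simp add: is_tree_def)
  note EI = edge_image[OF assms(5) sg]
  note AD = adj_distinct[OF assms(5) sg]
  have E: "e0 \<in> gE G" "e1 \<in> gE G" "e2 \<in> gE G" "e3 \<in> gE G" using assms(7) by auto
  note c0 = EI[OF E(1) assms(8)] and c1 = EI[OF E(2) assms(9)]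
    and c2 = EI[OF E(3) assms(10)] and c3 = EI[OF E(4) assms(11)]
  have d: "v0 \<noteq> v2" "v1 \<noteq> v3" "v2 \<noteq> v0" "v3 \<noteq> v1" using assms(6) by auto
  show ?thesis
  proof (rule comb[OF assms(1) c0 c1 c2 c3])
    assume h: "fl e0 \<notin> gS (Tk VT ET k) \<and> fl e1 \<notin> gS (Tk VT ET k)"
    show "fv v0 \<noteq> fv v2"
    proof
      assume "fv v0 = fv v2"
      then have "fl e0 = fl e1" using c0 c1 h by (auto simp: insert_commute)
      then show False using AD[OF E(1) E(2) assms(8) assms(9) d(1)] h by blast
    qed
  next
    assume h: "fl e1 \<notin> gS (Tk VT ET k) \<and> fl e2 \<notin> gS (Tk VT ET k)"
    show "fv v1 \<noteq> fv v3"
    proof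
      assume "fv v1 = fv v3"
      then have "fl e1 = fl e2" using c1 c2 h by (auto simp: insert_commute)
      then show False using AD[OF E(2) E(3) assms(9) assms(10) d(2)] h by blast
    qed
  next
    assume h: "fl e2 \<notin> gS (Tk VT ET k) \<and> fl e3 \<notin> gS (Tk VT ET k)"
    show "fv v2 \<noteq> fv v0"
    proof
      assume "fv v2 = fv v0"
      then have "fl e2 = fl e3" using c2 c3 h by (auto simp: insert_commute)
      then show False using AD[OF E(3) E(4) assms(10) assms(11) d(3)] h by blast
    qed
  next
    assume h: "fl e3 \<notin> gS (Tk VT ET k) \<and> fl e0 \<notin> gS (Tk VT ET k)"
    show "fv v3 \<noteq> fv v1"
    proof
      assume "fv v3 = fv v1"
      then have "fl e3 = fl e0" using c3 c0 h by (auto simp: insert_commute)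
      then show False using AD[OF E(4) E(1) assms(11) assms(8) d(4)] h by blast
    qed
  qed
qed

end
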